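(* Let $\sigma=(V,\mathrm{atime},\mathrm{pos})$ be an instance of $k$-MPMD on an $H$-metric space with parameter $\gamma$. Let $\mathcal M$ be any perfect $k$-way matching of $V$ and let $M=\{\{u,v\}\in E:\exists F\in\mathcal M,\ u,v\in F\}$. Then the characteristic vector $x=\mathbb 1_M\in\{0,1\}^E$ is a feasible solution of the linear program $(\mathcal P')$. Moreover, $\mathcal P'(\sigma)\le\mathcal{OPT}(\sigma)$, where $\mathcal P'(\sigma)$ is the optimal value of $(\mathcal P')$.
   Context: $k\ge2$. An $H$-metric with parameter $\gamma$ (integer, $1\le\gamma\le k-1$) is a map $d_H:\chi^k\to[0,\infty)$ that is invariant under permutation of its arguments, is zero iff all arguments are equal, satisfies $d_H(p_1,\ldots,p_k)\le d_H(p_1,\ldots,p_i,a,\ldots,a)+d_H(a,\ldots,a,p_{i+1},\ldots,p_k)$ for all $p_j,a\in\chi$ and $i\in\{1,\dots,k\}$ (with $k-i$, resp. $i$, copies of $a$), and satisfies: $d_H(p)\le d_H(p')$ whenever the set of distinct entries of $p$ is a proper subset of that of $p'$, and $d_H(p)\le\gamma d_H(p')$ whenever these sets are equal. An instance of $k$-MPMD is $\sigma=(V,\mathrm{atime},\mathrm{pos})$ with $V=\{u_1,\ldots,u_m\}$ a set of requests ($m$ a multiple of $k$), arrival times $\mathrm{atime}:V\to\mathbb R_{\ge0}$ nondecreasing in the index, and positions $\mathrm{pos}:V\to\chi$. A perfect $k$-way matching is a partition of $V$ into $k$-element sets. For a $k$-element $F=\{v_1,\ldots,v_k\}$, $\mathrm{opt\text{-}cost}(F):=d_H(\mathrm{pos}(v_1),\ldots,\mathrm{pos}(v_k))+\sum_{i=1}^k(\max_j\mathrm{atime}(v_j)-\mathrm{atime}(v_i))$,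 and $\mathcal{OPT}(\sigma)$ is the minimum of $\sum_{F\in\mathcal M}\mathrm{opt\text{-}cost}(F)$ over perfect $k$-way matchings $\mathcal M$ (the offline optimum). The metric $d$ on $\chi$ is $d(p,q):=d_H(p,q,\ldots,q)+d_H(q,p,\ldots,p)$ (first argument once, second $k-1$ times). $E$ is the set of unordered pairs $\{u,w\}$ of distinct requests, and $\mathrm{opt\text{-}cost}(\{u,w\}):=d(\mathrm{pos}(u),\mathrm{pos}(w))+|\mathrm{atime}(u)-\mathrm{atime}(w)|$. For $S\subseteq V$, $\mathrm{sur}(S):=|S|\bmod k$ and $\delta(S)$ is the set of pairs in $E$ with exactly one element in $S$. The LP $(\mathcal P')$ is: minimize $\sum_{e\in E}\frac{1}{\gamma k^2}\mathrm{opt\text{-}cost}(e)x_e$ subject to $\sum_{e\in\delta(S)}x_e\ge\mathrm{sur}(S)(k-\mathrm{sur}(S))$ for all $S\subseteq V$, and $x_e\ge0$ for all $e\in E$. *)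

theory Defs
  imports Complex_Main "HOL-Library.Disjoint_Sets" "HOL-Library.Multiset"
begin

(* Points of chi have type 'a; a tuple in chi^k is a list of length k. *)
definition H_metric :: "nat \<Rightarrow> nat \<Rightarrow> ('a list \<Rightarrow> real) \<Rightarrow> bool" where
  "H_metric k \<gamma> dH \<longleftrightarrow>
     1 \<le> \<gamma> \<and> \<gamma> \<le> k - 1 \<and>
     (\<forall>p. length p = k \<longrightarrow> dH p \<ge> 0) \<and>
     (\<forall>p q. length p = k \<longrightarrow> mset q = mset p \<longrightarrow> dH q = dH p) \<and>
     (\<forall>p. length p = k \<longrightarrow> (dH p = 0 \<longleftrightarrow> (\<forall>x\<in>set p. \<forall>y\<in>set p. x = y))) \<and>
     (\<forall>p a i. length p = k \<longrightarrow> 1 \<le> i \<longrightarrow> i \<le> k \<longrightarrow>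
        dH p \<le> dH (take i p @ replicate (k - i) a) + dH (replicate i a @ drop i p)) \<and>
     (\<forall>p p'. length p = k \<longrightarrow> length p' = k \<longrightarrow> set p \<subset> set p' \<longrightarrow> dH p \<le> dH p') \<and>
     (\<forall>p p'. length p = k \<longrightarrow> length p' = k \<longrightarrow> set p = set p' \<longrightarrow> dH p \<le> real \<gamma> * dH p')"

(* An instance: requests are the indices 0..<m, i.e. V = {0..<m}. *)
definition MPMD_instance :: "nat \<Rightarrow> nat \<Rightarrow> (nat \<Rightarrow> real) \<Rightarrow> bool" where
  "MPMD_instance k m atime \<longleftrightarrow> k dvd m \<and> (\<forall>i<m. atime i \<ge> 0) \<and>
     (\<forall>i j. i \<le> j \<longrightarrow> j < m \<longrightarrow> atime i \<le> atime j)"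

definition perfect_kway_matching :: "nat \<Rightarrow> 'v set \<Rightarrow> 'v set set \<Rightarrow> bool" where
  "perfect_kway_matching k V \<M> \<longleftrightarrow> partition_on V \<M> \<and> (\<forall>F\<in>\<M>. card F = k)"

definition opt_cost_set :: "('a list \<Rightarrow> real) \<Rightarrow> (nat \<Rightarrow> real) \<Rightarrow> (nat \<Rightarrow> 'a) \<Rightarrow> nat set \<Rightarrow> real" where
  "opt_cost_set dH atime pos F =
     dH (map pos (sorted_list_of_set F)) + (\<Sum>v\<in>F. Max (atime ` F) - atime v)"

definition OPT :: "nat \<Rightarrow> ('a list \<Rightarrow> real) \<Rightarrow> nat \<Rightarrow> (nat \<Rightarrow> real) \<Rightarrow> (nat \<Rightarrow> 'a) \<Rightarrow> real" where
  "OPT k dH m atime pos =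
     Min {(\<Sum>F\<in>\<M>. opt_cost_set dH atime pos F) | \<M>. perfect_kway_matching k {0..<m} \<M>}"

definition dmet :: "nat \<Rightarrow> ('a list \<Rightarrow> real) \<Rightarrow> 'a \<Rightarrow> 'a \<Rightarrow> real" where
  "dmet k dH p q = dH (p # replicate (k - 1) q) + dH (q # replicate (k - 1) p)"

definition edges :: "nat set \<Rightarrow> nat set set" where
  "edges V = {e. \<exists>u w. u \<in> V \<and> w \<in> V \<and> u \<noteq> w \<and> e = {u, w}}"

definition opt_cost_edge :: "nat \<Rightarrow> ('a list \<Rightarrow> real) \<Rightarrow> (nat \<Rightarrow> real) \<Rightarrow> (nat \<Rightarrow> 'a) \<Rightarrow> nat set \<Rightarrow> real" where
  "opt_cost_edge k dH atime pos e =
     (THE c. \<exists>u w. e = {u, w} \<and> c = dmet k dH (pos u) (pos w) + \<bar>atime u - atime w\<bar>)"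

definition sur :: "nat \<Rightarrow> nat set \<Rightarrow> nat" where
  "sur k S = card S mod k"

definition cut :: "nat set \<Rightarrow> nat set \<Rightarrow> nat set set" where
  "cut V S = {e \<in> edges V. card (e \<inter> S) = 1}"

definition P'_feasible :: "nat \<Rightarrow> nat \<Rightarrow> (nat set \<Rightarrow> real) \<Rightarrow> bool" where
  "P'_feasible k m x \<longleftrightarrow>
     (\<forall>S\<subseteq>{0..<m}. (\<Sum>e\<in>cut {0..<m} S. x e) \<ge> real (sur k S * (k - sur k S))) \<and>
     (\<forall>e\<in>edges {0..<m}. x e \<ge> 0)"

definition P'_obj :: "nat \<Rightarrow> nat \<Rightarrow> ('a list \<Rightarrow> real) \<Rightarrow> nat \<Rightarrow> (nat \<Rightarrow> real) \<Rightarrow> (nat \<Rightarrow> 'a) \<Rightarrow> (nat set \<Rightarrow> real) \<Rightarrow> real" where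
  "P'_obj k \<gamma> dH m atime pos x =
     (\<Sum>e\<in>edges {0..<m}. 1 / (real \<gamma> * real k ^ 2) * opt_cost_edge k dH atime pos e * x e)"

definition P'_value :: "nat \<Rightarrow> nat \<Rightarrow> ('a list \<Rightarrow> real) \<Rightarrow> nat \<Rightarrow> (nat \<Rightarrow> real) \<Rightarrow> (nat \<Rightarrow> 'a) \<Rightarrow> real" where
  "P'_value k \<gamma> dH m atime pos = Inf {P'_obj k \<gamma> dH m atime pos x | x. P'_feasible k m x}"

end

theory Submission
  imports Defs
begin

lemma opt_cost_edge_eq:
  "opt_cost_edge k dH atime pos {u,w} = dmet k dH (pos u) (pos w) + \<bar>atime u - atime w\<bar>"
  unfolding opt_cost_edge_def
proof (rule the_equality)
  show "\<exists>u' w'. {u, w} = {u', w'} \<and> dmet k dH (pos u) (pos w) + \<bar>atime u - atime w\<bar>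
     = dmet k dH (pos u') (pos w') + \<bar>atime u' - atime w'\<bar>" by blast
next
  fix c assume "\<exists>u' w'. {u, w} = {u', w'} \<and> c = dmet k dH (pos u') (pos w') + \<bar>atime u' - atime w'\<bar>"
  then obtain u' w' where e: "{u, w} = {u', w'}" and c: "c = dmet k dH (pos u') (pos w') + \<bar>atime u' - atime w'\<bar>" by blast
  from e have "(u = u' \<and> w = w') \<or> (u = w' \<and> w = u')" by (simp add: doubleton_eq_iff)
  then show "c = dmet k dH (pos u) (pos w) + \<bar>atime u - atime w\<bar>"
    using c by (auto simp: dmet_def abs_minus_commute)
qed

lemma edges_sub: "edges F \<subseteq> {B. B \<subseteq> F \<and> card B = 2}"
  unfolding edges_def by auto

lemma card_edges: assumes "finite F" shows "real (card (edges F)) * 2 \<le> real (card F) ^ 2"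
proof -
  have "card (edges F) \<le> card {B. B \<subseteq> F \<and> card B = 2}"
    by (rule card_mono[OF _ edges_sub]) (use assms in auto)
  also have "\<dots> = card F choose 2" using n_subsets[OF assms] by simp
  also have "\<dots> = card F * (card F - 1) div 2" by (rule choose_two)
  finally have "card (edges F) * 2 \<le> card F * (card F - 1)" by linarith
  also have "\<dots> \<le> card F ^ 2" by (simp add: power2_eq_square)
  finally show ?thesis by (metis of_nat_le_iff of_nat_mult of_nat_numeral of_nat_power)
qed

lemma card_cross: assumes "finite F"
  shows "card {e \<in> edges F. card (e \<inter> S) = 1} = card (F \<inter> S) * card (F - S)"
proof -
  have eq: "{e \<in> edges F. card (e \<inter> S) = 1} = (\<lambda>(a,b). {a,b}) ` ((F \<inter> S) \<times> (F - S))"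
  proof
    show "{e \<in> edges F. card (e \<inter> S) = 1} \<subseteq> (\<lambda>(a,b). {a,b}) ` ((F \<inter> S) \<times> (F - S))"
    proof
      fix e assume "e \<in> {e \<in> edges F. card (e \<inter> S) = 1}"
      then obtain u w where uw: "u \<in> F" "w \<in> F" "u \<noteq> w" "e = {u,w}" and c: "card (e \<inter> S) = 1"
        unfolding edges_def by auto
      show "e \<in> (\<lambda>(a,b). {a,b}) ` ((F \<inter> S) \<times> (F - S))"
      proof (cases "u \<in> S")
        case True
        then have "w \<notin> S" using c uw by auto
        then show ?thesis using True uw by (auto intro!: image_eqI[where x="(u,w)"])
      next
        case False
        then have "w \<in> S" using c uw by (cases "w \<in> S") auto
        then show ?thesis using False uw by (auto intro!: image_eqI[where x="(w,u)"])
      qed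
    qed
  next
    show "(\<lambda>(a,b). {a,b}) ` ((F \<inter> S) \<times> (F - S)) \<subseteq> {e \<in> edges F. card (e \<inter> S) = 1}"
    proof
      fix e assume "e \<in> (\<lambda>(a,b). {a,b}) ` ((F \<inter> S) \<times> (F - S))"
      then obtain a b where ab: "a \<in> F" "a \<in> S" "b \<in> F" "b \<notin> S" "e = {a,b}" by auto
      then have "e \<inter> S = {a}" by auto
      then show "e \<in> {e \<in> edges F. card (e \<inter> S) = 1}" using ab unfolding edges_def by auto
    qed
  qed
  have inj: "inj_on (\<lambda>(a,b). {a,b}) ((F \<inter> S) \<times> (F - S))"
    by (auto simp: inj_on_def doubleton_eq_iff)
  show ?thesis unfolding eq card_image[OF inj] card_cartesian_product ..
qed

lemma f_step:
  fixes r b k :: nat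
  assumes "r < k" "b \<le> k"
  shows "((r + b) mod k) * (k - (r + b) mod k) \<le> r * (k - r) + b * (k - b)"
proof (cases "r + b < k")
  case True
  then obtain t where k: "k = r + b + t" using less_imp_add_positive by (metis add.commute le_add1 le_add_diff_inverse less_imp_le)
  have "(r+b) * t \<le> r * (b + t) + b * (r + t)" by (simp add: algebra_simps)
  then show ?thesis using k True by simp
next
  case False
  then obtain c where rb: "r + b = k + c" by (metis le_add_diff_inverse not_less)
  obtain a' where a': "k = r + a'" "a' > 0" using assms(1) by (metis less_imp_add_positive)
  obtain b' where b': "k = b + b'" using assms(2) by (metis le_add_diff_inverse)
  have r: "r = c + b'" using rb a' b' by linarith
  have b: "b = c + a'" using rb a' b' by linarith
  have kk: "k = c + a' + b'" using r a' by simp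
  have m: "(r + b) mod k = c"
  proof -
    have "(r+b) mod k = (c + k) mod k" using rb by (simp add: add.commute)
    also have "\<dots> = c mod k" by simp
    also have "\<dots> = c" using kk a' by simp
    finally show ?thesis .
  qed
  have "c * (a' + b') \<le> (c + b') * a' + (c + a') * b'" by (simp add: algebra_simps)
  then show ?thesis unfolding m using kk r b by simp
qed

lemma sum_f:
  fixes s :: "'b \<Rightarrow> nat"
  assumes "finite I" "\<forall>i\<in>I. s i \<le> k" "k > 0"
  shows "((\<Sum>i\<in>I. s i) mod k) * (k - (\<Sum>i\<in>I. s i) mod k) \<le> (\<Sum>i\<in>I. s i * (k - s i))"
  using assms
proof (induction I rule: finite_induct)
  case empty
  then show ?case by simp
next
  case (insert i I)
  let ?R = "\<Sum>i\<in>I. s i"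
  have ss: "(\<Sum>i\<in>insert i I. s i) = ?R + s i" using insert by simp
  have "(\<Sum>i\<in>insert i I. s i) mod k = (?R mod k + s i) mod k"
    unfolding ss by (simp only: mod_add_left_eq)
  moreover have "((?R mod k + s i) mod k) * (k - (?R mod k + s i) mod k)
      \<le> (?R mod k) * (k - ?R mod k) + s i * (k - s i)"
    by (rule f_step) (use insert in auto)
  moreover have "(?R mod k) * (k - ?R mod k) \<le> (\<Sum>i\<in>I. s i * (k - s i))"
    using insert by auto
  ultimately show ?case using insert by simp
qed

lemma dH_pair:
  assumes H: "H_metric k \<gamma> dH" and k: "k \<ge> 2" and F: "finite F" "card F = k"
    and uw: "u \<in> F" "w \<in> F"
  shows "dH (pos u # replicate (k - 1) (pos w)) \<le> real \<gamma> * dH (map pos (sorted_list_of_set F))"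
proof -
  let ?p = "pos u # replicate (k - 1) (pos w)"
  let ?L = "map pos (sorted_list_of_set F)"
  have lp: "length ?p = k" using k by simp
  have lL: "length ?L = k" using F by simp
  have sp: "set ?p = {pos u, pos w}" using k by auto
  have sL: "set ?L = pos ` F" using F by simp
  have sub: "set ?p \<subseteq> set ?L" using sp sL uw by auto
  from H have g: "1 \<le> \<gamma>" and nn: "\<forall>p. length p = k \<longrightarrow> dH p \<ge> 0"
    and m1: "\<forall>p p'. length p = k \<longrightarrow> length p' = k \<longrightarrow> set p \<subset> set p' \<longrightarrow> dH p \<le> dH p'"
    and m2: "\<forall>p p'. length p = k \<longrightarrow> length p' = k \<longrightarrow> set p = set p' \<longrightarrow> dH p \<le> real \<gamma> * dH p'"
    unfolding H_metric_def by blast+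
  have D: "dH ?L \<ge> 0" using nn lL by blast
  show ?thesis
  proof (cases "set ?p = set ?L")
    case True
    then show ?thesis using m2 lp lL by blast
  next
    case False
    then have "dH ?p \<le> dH ?L" using m1 lp lL sub by blast
    also have "1 * dH ?L \<le> real \<gamma> * dH ?L"
      by (rule mult_right_mono) (use g D in auto)
    finally show ?thesis by simp
  qed
qed

lemma oce_bound:
  assumes H: "H_metric k \<gamma> dH" and k: "k \<ge> 2" and F: "finite F" "card F = k"
    and e: "e \<in> edges F"
  shows "opt_cost_edge k dH atime pos e \<le> 2 * real \<gamma> * dH (map pos (sorted_list_of_set F))
           + (\<Sum>v\<in>F. Max (atime ` F) - atime v)"
proof -
  obtain u w where uw: "u \<in> F" "w \<in> F" "u \<noteq> w" "e = {u,w}" using e unfolding edges_def by auto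
  have d: "dmet k dH (pos u) (pos w) \<le> 2 * real \<gamma> * dH (map pos (sorted_list_of_set F))"
    using dH_pair[OF H k F uw(1,2), of pos] dH_pair[OF H k F uw(2,1), of pos]
    unfolding dmet_def by linarith
  have Fne: "F \<noteq> {}" using uw by auto
  have mu: "atime u \<le> Max (atime ` F)" and mw: "atime w \<le> Max (atime ` F)"
    using F uw by auto
  have "\<bar>atime u - atime w\<bar> \<le> (\<Sum>v\<in>{u,w}. Max (atime ` F) - atime v)"
    using mu mw uw by auto
  also have "\<dots> \<le> (\<Sum>v\<in>F. Max (atime ` F) - atime v)"
    by (rule sum_mono2) (use F uw in auto)
  finally have "\<bar>atime u - atime w\<bar> \<le> (\<Sum>v\<in>F. Max (atime ` F) - atime v)" .
  then show ?thesis unfolding uw(4) opt_cost_edge_eq using d by linarith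
qed

lemma per_F:
  assumes H: "H_metric k \<gamma> dH" and k: "k \<ge> 2" and F: "finite F" "card F = k"
  shows "(\<Sum>e\<in>edges F. 1 / (real \<gamma> * real k ^ 2) * opt_cost_edge k dH atime pos e)
         \<le> opt_cost_set dH atime pos F"
proof -
  define D where "D = dH (map pos (sorted_list_of_set F))"
  define T where "T = (\<Sum>v\<in>F. Max (atime ` F) - atime v)"
  define c where "c = 1 / (real \<gamma> * real k ^ 2)"
  have g: "1 \<le> \<gamma>" and nn: "\<forall>p. length p = k \<longrightarrow> dH p \<ge> 0"
    using H unfolding H_metric_def by blast+
  have D0: "D \<ge> 0" unfolding D_def using nn F by simp
  have T0: "T \<ge> 0" unfolding T_def by (rule sum_nonneg) (use F in auto)
  have gr: "real \<gamma> \<ge> 1" using g by simp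
  have kr: "real k \<ge> 2" using k by simp
  have c0: "c \<ge> 0" unfolding c_def using gr by simp
  have X0: "D + T \<ge> 0" using D0 T0 by simp
  have "(\<Sum>e\<in>edges F. c * opt_cost_edge k dH atime pos e)
      \<le> (\<Sum>e\<in>edges F. c * (2 * real \<gamma> * (D + T)))"
  proof (rule sum_mono)
    fix e assume "e \<in> edges F"
    have "opt_cost_edge k dH atime pos e \<le> 2 * real \<gamma> * D + T"
      using oce_bound[OF H k F \<open>e \<in> edges F\<close>] unfolding D_def T_def .
    also have "T \<le> 2 * real \<gamma> * T"
    proof -
      have "1 * T \<le> (2 * real \<gamma>) * T" by (rule mult_right_mono) (use gr T0 in auto)
      then show ?thesis by simp
    qed
    then have "2 * real \<gamma> * D + T \<le> 2 * real \<gamma> * (D + T)"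
      by (simp add: distrib_left)
    finally show "c * opt_cost_edge k dH atime pos e \<le> c * (2 * real \<gamma> * (D + T))"
      by (rule mult_left_mono) (rule c0)
  qed
  also have "\<dots> = real (card (edges F)) * (c * (2 * real \<gamma>)) * (D + T)"
    by (simp add: mult.assoc)
  also have "c * (2 * real \<gamma>) = 2 / real k ^ 2"
    unfolding c_def using gr by simp
  also have "real (card (edges F)) * (2 / real k ^ 2) \<le> 1"
  proof -
    have "real (card (edges F)) * 2 \<le> real k ^ 2" using card_edges[OF F(1)] F by simp
    moreover have "real k ^ 2 > 0" using kr by simp
    ultimately show ?thesis by (simp add: divide_le_eq_1 times_divide_eq_right)
  qed
  then have "real (card (edges F)) * (2 / real k ^ 2) * (D + T) \<le> 1 * (D + T)"
    by (rule mult_right_mono) (rule X0)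
  finally show ?thesis unfolding opt_cost_set_def D_def T_def c_def by simp
qed

lemma match_facts:
  assumes "perfect_kway_matching k V M" "finite V"
  shows "finite M" "\<And>F. F \<in> M \<Longrightarrow> F \<subseteq> V" "\<And>F. F \<in> M \<Longrightarrow> finite F"
    "\<And>F. F \<in> M \<Longrightarrow> card F = k" "\<And>F G. F \<in> M \<Longrightarrow> G \<in> M \<Longrightarrow> F \<noteq> G \<Longrightarrow> F \<inter> G = {}"
    "\<Union>M = V"
proof -
  have p: "partition_on V M" and c: "\<forall>F\<in>M. card F = k"
    using assms(1) unfolding perfect_kway_matching_def by auto
  show U: "\<Union>M = V" using p unfolding partition_on_def by auto
  show s: "\<And>F. F \<in> M \<Longrightarrow> F \<subseteq> V" using U by auto
  show "finite M" using U assms(2) by (simp add: finite_UnionD)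
  show "\<And>F. F \<in> M \<Longrightarrow> finite F" using s assms(2) by (meson finite_subset)
  show "\<And>F. F \<in> M \<Longrightarrow> card F = k" using c by auto
  show "\<And>F G. F \<in> M \<Longrightarrow> G \<in> M \<Longrightarrow> F \<noteq> G \<Longrightarrow> F \<inter> G = {}"
    using p unfolding partition_on_def disjoint_def by auto
qed

lemma edges_fin: "finite V \<Longrightarrow> finite (edges V)"
proof -
  assume "finite V"
  have "edges V \<subseteq> Pow V" using edges_sub by blast
  then show ?thesis using \<open>finite V\<close> by (meson finite_Pow_iff finite_subset)
qed

lemma ME_eq:
  assumes "perfect_kway_matching k V M" "finite V"
  shows "{e \<in> edges V. \<exists>F\<in>M. e \<subseteq> F} = (\<Union>F\<in>M. edges F)"
proof
  show "{e \<in> edges V. \<exists>F\<in>M. e \<subseteq> F} \<subseteq> (\<Union>F\<in>M. edges F)"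
  proof
    fix e assume "e \<in> {e \<in> edges V. \<exists>F\<in>M. e \<subseteq> F}"
    then obtain F u w where "F \<in> M" "e \<subseteq> F" "u \<noteq> w" "e = {u,w}"
      unfolding edges_def by blast
    then have "e \<in> edges F" unfolding edges_def by blast
    then show "e \<in> (\<Union>F\<in>M. edges F)" using \<open>F \<in> M\<close> by blast
  qed
  show "(\<Union>F\<in>M. edges F) \<subseteq> {e \<in> edges V. \<exists>F\<in>M. e \<subseteq> F}"
  proof
    fix e assume "e \<in> (\<Union>F\<in>M. edges F)"
    then obtain F where F: "F \<in> M" "e \<in> edges F" by blast
    then obtain u w where uw: "u \<in> F" "w \<in> F" "u \<noteq> w" "e = {u,w}"
      unfolding edges_def by blast
    have "F \<subseteq> V" using match_facts(2)[OF assms F(1)] .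
    then have "e \<in> edges V" using uw unfolding edges_def by blast
    moreover have "e \<subseteq> F" using uw by blast
    ultimately show "e \<in> {e \<in> edges V. \<exists>F\<in>M. e \<subseteq> F}" using F(1) by blast
  qed
qed

lemma edges_disj:
  assumes "perfect_kway_matching k V M" "finite V"
  shows "\<forall>F\<in>M. \<forall>G\<in>M. F \<noteq> G \<longrightarrow> edges F \<inter> edges G = {}"
proof (intro ballI impI)
  fix F G assume "F \<in> M" "G \<in> M" "F \<noteq> G"
  then have "F \<inter> G = {}" using match_facts(5)[OF assms] by auto
  show "edges F \<inter> edges G = {}"
  proof (rule ccontr)
    assume "edges F \<inter> edges G \<noteq> {}"
    then obtain e where "e \<in> edges F" "e \<in> edges G" by blast
    then have "e \<subseteq> F" "e \<subseteq> G" "card e = 2" using edges_sub by blast+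
    then have "e \<subseteq> F \<inter> G" "e \<noteq> {}" by auto
    then show False using \<open>F \<inter> G = {}\<close> by simp
  qed
qed

lemma feas:
  assumes k: "k \<ge> 2" and M: "perfect_kway_matching k {0..<m} M"
  shows "P'_feasible k m (\<lambda>e. if e \<in> {e \<in> edges {0..<m}. \<exists>F\<in>M. e \<subseteq> F} then 1 else 0)"
  unfolding P'_feasible_def
proof (intro conjI allI impI ballI)
  fix e show "0 \<le> (if e \<in> {e \<in> edges {0..<m}. \<exists>F\<in>M. e \<subseteq> F} then 1 else 0 :: real)" by simp
next
  fix S assume S: "S \<subseteq> {0..<m}"
  let ?V = "{0..<m::nat}"
  let ?ME = "{e \<in> edges ?V. \<exists>F\<in>M. e \<subseteq> F}"
  have fV: "finite ?V" by simp
  note mf = match_facts[OF M fV]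
  have fc: "finite (cut ?V S)" unfolding cut_def using edges_fin[OF fV] by simp
  have "(\<Sum>e\<in>cut ?V S. (if e \<in> ?ME then 1 else 0 :: real)) = real (card (cut ?V S \<inter> ?ME))"
    using fc by (simp add: sum.If_cases)
  also have "cut ?V S \<inter> ?ME = (\<Union>F\<in>M. {e \<in> edges F. card (e \<inter> S) = 1})"
    unfolding ME_eq[OF M fV] cut_def using mf(2) unfolding edges_def by blast
  also have "card (\<Union>F\<in>M. {e \<in> edges F. card (e \<inter> S) = 1}) = (\<Sum>F\<in>M. card {e \<in> edges F. card (e \<inter> S) = 1})"
  proof (rule card_UN_disjoint)
    show "finite M" by (rule mf(1))
    show "\<forall>F\<in>M. finite {e \<in> edges F. card (e \<inter> S) = 1}"
      using mf(3) edges_fin by simp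
    show "\<forall>F\<in>M. \<forall>G\<in>M. F \<noteq> G \<longrightarrow> {e \<in> edges F. card (e \<inter> S) = 1} \<inter> {e \<in> edges G. card (e \<inter> S) = 1} = {}"
      using edges_disj[OF M fV] by blast
  qed
  also have "\<dots> = (\<Sum>F\<in>M. card (F \<inter> S) * (k - card (F \<inter> S)))"
  proof (rule sum.cong)
    fix F assume F: "F \<in> M"
    have "card (F - S) = card F - card (F \<inter> S)"
      using mf(3)[OF F] by (metis Diff_Int2 Diff_Int_distrib2 card_Diff_subset_Int finite_Int inf.idem)
    then show "card {e \<in> edges F. card (e \<inter> S) = 1} = card (F \<inter> S) * (k - card (F \<inter> S))"
      using card_cross[OF mf(3)[OF F]] mf(4)[OF F] by simp
  qed simp
  finally have eq: "(\<Sum>e\<in>cut ?V S. (if e \<in> ?ME then 1 else 0 :: real))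
      = real (\<Sum>F\<in>M. card (F \<inter> S) * (k - card (F \<inter> S)))" .
  have cS: "(\<Sum>F\<in>M. card (F \<inter> S)) = card S"
  proof -
    have "card (\<Union>F\<in>M. F \<inter> S) = (\<Sum>F\<in>M. card (F \<inter> S))"
      by (rule card_UN_disjoint) (use mf(1,3,5) in auto)
    moreover have "(\<Union>F\<in>M. F \<inter> S) = S" using mf(6) S by auto
    ultimately show ?thesis by simp
  qed
  have "sur k S * (k - sur k S) \<le> (\<Sum>F\<in>M. card (F \<inter> S) * (k - card (F \<inter> S)))"
    unfolding sur_def cS[symmetric]
    by (rule sum_f) (use mf(1,3,4) k in \<open>auto intro: card_mono\<close>)
  then show "real (sur k S * (k - sur k S)) \<le> (\<Sum>e\<in>cut ?V S. (if e \<in> ?ME then 1 else 0 :: real))"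
    unfolding eq by linarith
qed

lemma obj_le:
  assumes H: "H_metric k \<gamma> dH" and k: "k \<ge> 2" and M: "perfect_kway_matching k {0..<m} M"
  shows "P'_obj k \<gamma> dH m atime pos (\<lambda>e. if e \<in> {e \<in> edges {0..<m}. \<exists>F\<in>M. e \<subseteq> F} then 1 else 0)
     \<le> (\<Sum>F\<in>M. opt_cost_set dH atime pos F)"
proof -
  let ?V = "{0..<m::nat}"
  let ?ME = "{e \<in> edges ?V. \<exists>F\<in>M. e \<subseteq> F}"
  let ?g = "\<lambda>e. 1 / (real \<gamma> * real k ^ 2) * opt_cost_edge k dH atime pos e"
  have fV: "finite ?V" by simp
  note mf = match_facts[OF M fV]
  have "P'_obj k \<gamma> dH m atime pos (\<lambda>e. if e \<in> ?ME then 1 else 0)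
      = (\<Sum>e\<in>edges ?V. if (\<exists>F\<in>M. e \<subseteq> F) then ?g e else 0)"
    unfolding P'_obj_def by (rule sum.cong) auto
  also have "\<dots> = sum ?g ?ME"
    by (rule sum.inter_filter[symmetric]) (rule edges_fin[OF fV])
  also have "\<dots> = sum ?g (\<Union>F\<in>M. edges F)" unfolding ME_eq[OF M fV] ..
  also have "\<dots> = (\<Sum>F\<in>M. sum ?g (edges F))"
  proof (rule sum.UNION_disjoint)
    show "finite M" by (rule mf(1))
    show "\<forall>F\<in>M. finite (edges F)" using mf(3) edges_fin by simp
    show "\<forall>F\<in>M. \<forall>G\<in>M. F \<noteq> G \<longrightarrow> edges F \<inter> edges G = {}" by (rule edges_disj[OF M fV])
  qed
  also have "\<dots> \<le> (\<Sum>F\<in>M. opt_cost_set dH atime pos F)"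
    by (rule sum_mono) (rule per_F[OF H k mf(3) mf(4)])
  finally show ?thesis .
qed

lemma obj_nonneg:
  assumes H: "H_metric k \<gamma> dH" and k: "k \<ge> 2" and x: "P'_feasible k m x"
  shows "P'_obj k \<gamma> dH m atime pos x \<ge> 0"
  unfolding P'_obj_def
proof (rule sum_nonneg)
  fix e assume e: "e \<in> edges {0..<m}"
  have g: "1 \<le> \<gamma>" and nn: "\<forall>p. length p = k \<longrightarrow> dH p \<ge> 0"
    using H unfolding H_metric_def by blast+
  obtain u w where uw: "e = {u,w}" using e unfolding edges_def by blast
  have "dmet k dH (pos u) (pos w) \<ge> 0" unfolding dmet_def using nn k by simp
  then have "opt_cost_edge k dH atime pos e \<ge> 0" unfolding uw opt_cost_edge_eq by simp
  moreover have "x e \<ge> 0" using x e unfolding P'_feasible_def by blast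
  moreover have "1 / (real \<gamma> * real k ^ 2) \<ge> 0" by simp
  ultimately show "0 \<le> 1 / (real \<gamma> * real k ^ 2) * opt_cost_edge k dH atime pos e * x e"
    by simp
qed

theorem lemma2:
  fixes k \<gamma> m :: nat and dH :: "'a list \<Rightarrow> real"
    and atime :: "nat \<Rightarrow> real" and pos :: "nat \<Rightarrow> 'a" and \<M> :: "nat set set"
  assumes "k \<ge> 2"
    and "H_metric k \<gamma> dH"
    and "MPMD_instance k m atime"
    and "perfect_kway_matching k {0..<m} \<M>"
  shows "P'_feasible k m (\<lambda>e. if e \<in> {e \<in> edges {0..<m}. \<exists>F\<in>\<M>. e \<subseteq> F} then 1 else 0)
         \<and> P'_value k \<gamma> dH m atime pos \<le> OPT k dH m atime pos"
proof
  show "P'_feasible k m (\<lambda>e. if e \<in> {e \<in> edges {0..<m}. \<exists>F\<in>\<M>. e \<subseteq> F} then 1 else 0)"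
    by (rule feas[OF assms(1,4)])
  let ?A = "{(\<Sum>F\<in>M. opt_cost_set dH atime pos F) | M. perfect_kway_matching k {0..<m} M}"
  have fin: "finite {M. perfect_kway_matching k {0..<m} M}"
  proof (rule finite_subset)
    show "{M. perfect_kway_matching k {0..<m} M} \<subseteq> Pow (Pow {0..<m})"
      using match_facts(2) by blast
  qed simp
  have "finite ?A" using finite_image_set[OF fin] .
  moreover have "?A \<noteq> {}" using assms(4) by blast
  ultimately have "Min ?A \<in> ?A" by (rule Min_in)
  then obtain M where M: "perfect_kway_matching k {0..<m} M"
    and OPTe: "OPT k dH m atime pos = (\<Sum>F\<in>M. opt_cost_set dH atime pos F)"
    unfolding OPT_def by auto
  let ?x = "\<lambda>e. if e \<in> {e \<in> edges {0..<m}. \<exists>F\<in>M. e \<subseteq> F} then 1 else (0::real)"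
  have bdd: "bdd_below {P'_obj k \<gamma> dH m atime pos x | x. P'_feasible k m x}"
    unfolding bdd_below_def using obj_nonneg[OF assms(2,1)] by blast
  have "P'_value k \<gamma> dH m atime pos \<le> P'_obj k \<gamma> dH m atime pos ?x"
    unfolding P'_value_def
    by (rule cInf_lower[OF _ bdd]) (use feas[OF assms(1) M] in blast)
  also have "\<dots> \<le> OPT k dH m atime pos"
    unfolding OPTe by (rule obj_le[OF assms(2,1) M])
  finally show "P'_value k \<gamma> dH m atime pos \<le> OPT k dH m atime pos" .
qed

end
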